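(* Let $(x_n)_{n\in\mathbb{N}}$ be a strictly increasing sequence of nonnegative reals with $x_0=0$, let $x_0!=1$, $x_n!=x_1\cdots x_n$, and suppose $\mathcal{N}(t)=\sum_{n\ge0}t^n/x_n!$ has radius of convergence $R=\lim_{n\to\infty}x_{n+1}\in(0,\infty]$. Suppose there is a probability density $w$ on $[0,R)$ with $x_n!=\int_0^R t^n w(t)\,dt$ for all $n\in\mathbb{N}$, and for real $\nu\geq 0$ define $x_\nu!=\int_0^R t^\nu w(t)\,dt$ (assumed finite). For $k\in\mathbb{N}$ and $0\le t<R$ set $$\mathcal{S}_k(t)=\frac{1}{\mathcal{N}(t)}\sum_{n=0}^{\infty}\frac{x_{\frac{k}{2}+n}!}{x_n!\,x_{n+k}!}\,t^{n+k/2}.$$ Then $\mathcal{S}_k(t)\le 1$ for all $k\in\mathbb{N}$ and all $0\le t<R$. *)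

theory Defs
  imports "HOL-Analysis.Analysis"
begin

definition xfact :: "(nat \<Rightarrow> real) \<Rightarrow> nat \<Rightarrow> real" where
  "xfact x n = (\<Prod>i=1..n. x i)"

definition Nfun :: "(nat \<Rightarrow> real) \<Rightarrow> real \<Rightarrow> real" where
  "Nfun x t = (\<Sum>n. t ^ n / xfact x n)"

definition gfact :: "ereal \<Rightarrow> (real \<Rightarrow> real) \<Rightarrow> real \<Rightarrow> real" where
  "gfact R w \<nu> = (LINT t:{t. 0 \<le> t \<and> ereal t < R}|lborel. t powr \<nu> * w t)"

text \<open>Terms of the series defining S_k(t); t^(n+k/2) is written t^n * (sqrt t)^k
  so that 0^0 = 1.\<close>
definition Sterm :: "(nat \<Rightarrow> real) \<Rightarrow> ereal \<Rightarrow> (real \<Rightarrow> real) \<Rightarrow> nat \<Rightarrow> real \<Rightarrow> nat \<Rightarrow> real" where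
  "Sterm x R w k t n =
     gfact R w (real k / 2 + real n) / (xfact x n * xfact x (n + k)) * (t ^ n * sqrt t ^ k)"

end

theory Submission
  imports Defs
begin

lemma sqrt_pow_sq: assumes "0 \<le> (s::real)" shows "sqrt s ^ k * sqrt s ^ k = s ^ k"
proof -
  have "sqrt s ^ k * sqrt s ^ k = (sqrt s * sqrt s) ^ k" by (rule power_mult_distrib[symmetric])
  also have "sqrt s * sqrt s = s" using assms by simp
  finally show ?thesis .
qed

lemma pointwise_bound:
  fixes s c :: real and n k :: nat
  assumes s: "0 \<le> s" and c: "0 < c" and wn: "0 \<le> ws"
  shows "s powr (real k / 2 + real n) * ws \<le> c / 2 * (s ^ n * ws) + 1 / (2 * c) * (s ^ (n + k) * ws)"
proof -
  define d where "d = sqrt s ^ k"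
  have d2: "d * d = s ^ k" unfolding d_def using s by (rule sqrt_pow_sq)
  have p: "s powr (real k / 2 + real n) \<le> s ^ n * d"
  proof (cases "s = 0")
    case True then show ?thesis by (simp add: d_def)
  next
    case False
    then have sp: "0 < s" using s by simp
    have "s powr (real k / 2 + real n) = s powr (real k / 2) * s powr real n"
      by (rule powr_add)
    also have "s powr (real k / 2) = sqrt s ^ k"
    proof -
      have "sqrt s ^ k = (s powr (1/2)) ^ k" using s by (simp add: powr_half_sqrt)
      also have "\<dots> = s powr (real k * (1/2))" using False by (rule powr_power)
      finally show ?thesis by simp
    qed
    also have "s powr real n = s ^ n" using sp by (rule powr_realpow)
    finally show ?thesis by (simp add: d_def mult.commute)
  qed
  have q: "d \<le> c / 2 + d * d / (2 * c)"
  proof -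
    have "0 \<le> (c - d)^2 / (2*c)" using c by simp
    also have "(c - d)^2 / (2*c) = c/2 + d*d/(2*c) - d" using c
      by (simp add: field_simps power2_eq_square)
    finally show ?thesis by simp
  qed
  have "s powr (real k / 2 + real n) * ws \<le> (s ^ n * d) * ws"
    using p wn by (rule mult_right_mono)
  also have "\<dots> \<le> (s ^ n * (c / 2 + d * d / (2 * c))) * ws"
    using q s wn by (intro mult_right_mono mult_left_mono) auto
  also have "\<dots> = c / 2 * (s ^ n * ws) + 1 / (2 * c) * (s ^ n * (d * d) * ws)"
    by (simp add: algebra_simps)
  also have "s ^ n * (d * d) = s ^ (n + k)" by (simp add: d2 power_add)
  finally show ?thesis .
qed

lemma alg1:
  fixes an ank c T :: real
  assumes "0 < an" "0 < ank" "0 < c"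
  shows "(c / 2 * an + 1 / (2 * c) * ank) * (T * c / (an * ank)) = (T * (c * c) / ank + T / an) / 2"
  using assms by (simp add: field_simps)

lemma alg2:
  fixes g X T :: real
  shows "g / X * T = g * (T / X)"
  by simp

lemma alg3:
  fixes T U an ank :: real
  shows "(T * U / ank + T / an) / 2 = (T / an + T * U / ank) / 2"
  by simp

theorem mainTheorem3:
  fixes x :: "nat \<Rightarrow> real" and w :: "real \<Rightarrow> real" and R :: ereal
  assumes mono: "strict_mono x"
    and x0: "x 0 = 0"
    and nonneg: "\<And>n. 0 \<le> x n"
    and Rlim: "(\<lambda>n. ereal (x (Suc n))) \<longlonglongrightarrow> R"
    and Rpos: "0 < R"
    and radius: "conv_radius (\<lambda>n. 1 / xfact x n) = R"
    and w_meas: "w \<in> borel_measurable lborel"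
    and w_nonneg: "\<And>t. 0 \<le> t \<Longrightarrow> ereal t < R \<Longrightarrow> 0 \<le> w t"
    and w_int: "set_integrable lborel {t. 0 \<le> t \<and> ereal t < R} w"
    and w_prob: "(LINT t:{t. 0 \<le> t \<and> ereal t < R}|lborel. w t) = 1"
    and moments_int: "\<And>n::nat. set_integrable lborel {t. 0 \<le> t \<and> ereal t < R} (\<lambda>t. t ^ n * w t)"
    and moments: "\<And>n::nat. xfact x n = (LINT t:{t. 0 \<le> t \<and> ereal t < R}|lborel. t ^ n * w t)"
    and real_moments_int: "\<And>\<nu>::real. 0 \<le> \<nu> \<Longrightarrow>
          set_integrable lborel {t. 0 \<le> t \<and> ereal t < R} (\<lambda>t. t powr \<nu> * w t)"
  shows "\<forall>k::nat. \<forall>t::real. 0 \<le> t \<and> ereal t < R \<longrightarrow>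
           summable (Sterm x R w k t) \<and> (\<Sum>n. Sterm x R w k t n) / Nfun x t \<le> 1"
proof (intro allI impI)
  fix k :: nat and t :: real
  assume tt: "0 \<le> t \<and> ereal t < R"
  have t0: "0 \<le> t" using tt by (rule conjunct1)
  have tR: "ereal t < R" using tt by (rule conjunct2)
  define A where "A = {t. 0 \<le> t \<and> ereal t < R}"
  define a where "a = xfact x"
  have i1: "set_integrable lborel A (\<lambda>s. s ^ n * w s)" for n unfolding A_def by (rule moments_int)
  have apos: "0 < a n" for n
  proof -
    have "0 < x i" if "1 \<le> i" for i
      using strict_monoD[OF mono, of 0 i] that x0 by simp
    then show ?thesis unfolding a_def xfact_def by (intro prod_pos) auto
  qed
  define f where "f = (\<lambda>n. t ^ n / a n)"
  have fnn: "0 \<le> f n" for n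
  proof -
    have "0 \<le> t ^ n" using t0 by simp
    then show ?thesis unfolding f_def using apos[of n] by (rule divide_nonneg_pos)
  qed
  have nt: "ereal (norm t) < conv_radius (\<lambda>n. 1 / xfact x n)"
    unfolding radius using tR by (simp only: real_norm_def abs_of_nonneg[OF t0])
  have fe: "(\<lambda>n. 1 / xfact x n * t ^ n) = f"
    by (rule ext) (simp add: f_def a_def)
  have sumf: "summable f"
    using summable_in_conv_radius[OF nt] unfolding fe .
  have Nf: "Nfun x t = suminf f" unfolding Nfun_def f_def a_def ..
  have gnn: "0 \<le> gfact R w \<nu>" if "0 \<le> \<nu>" for \<nu>
    unfolding gfact_def set_lebesgue_integral_def
    by (rule Bochner_Integration.integral_nonneg) (auto simp: w_nonneg split: split_indicator)
  have bound: "Sterm x R w k t n \<le> (f n + f (n + k)) / 2" for n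
  proof (cases "t = 0 \<and> k > 0")
    case True
    then have "Sterm x R w k t n = 0" unfolding Sterm_def by simp
    then show ?thesis using fnn[of n] fnn[of "n+k"] by simp
  next
    case False
    define c where "c = sqrt t ^ k"
    have cpos: "0 < c" using False t0 unfolding c_def by auto
    have c2: "c * c = t ^ k" unfolding c_def using t0 by (rule sqrt_pow_sq)
    have "gfact R w (real k / 2 + real n) \<le>
        (LINT s:A|lborel. c / 2 * (s ^ n * w s) + 1 / (2 * c) * (s ^ (n + k) * w s))"
      unfolding gfact_def A_def[symmetric]
    proof (rule set_integral_mono)
      show "set_integrable lborel A (\<lambda>s. s powr (real k / 2 + real n) * w s)"
        unfolding A_def by (rule real_moments_int) simp
      show "set_integrable lborel A (\<lambda>s. c / 2 * (s ^ n * w s) + 1 / (2 * c) * (s ^ (n + k) * w s))"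
        by (rule set_integral_add(1)[OF set_integrable_mult_right set_integrable_mult_right]) (rule i1)+
      fix s assume "s \<in> A"
      then show "s powr (real k / 2 + real n) * w s \<le> c / 2 * (s ^ n * w s) + 1 / (2 * c) * (s ^ (n + k) * w s)"
        using cpos w_nonneg unfolding A_def by (intro pointwise_bound) auto
    qed
    also have "\<dots> = (LINT s:A|lborel. c / 2 * (s ^ n * w s)) + (LINT s:A|lborel. 1 / (2 * c) * (s ^ (n + k) * w s))"
      by (rule set_integral_add(2)[OF set_integrable_mult_right set_integrable_mult_right]) (rule i1)+
    also have "\<dots> = c / 2 * (LINT s:A|lborel. s ^ n * w s) + 1 / (2 * c) * (LINT s:A|lborel. s ^ (n + k) * w s)"
      by (simp only: set_integral_mult_right)
    also have "\<dots> = c / 2 * a n + 1 / (2 * c) * a (n + k)"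
      unfolding a_def A_def moments ..
    finally have g: "gfact R w (real k / 2 + real n) \<le> c / 2 * a n + 1 / (2 * c) * a (n + k)" .
    have pos: "0 \<le> t ^ n * c / (a n * a (n + k))" using t0 cpos apos
      by (intro divide_nonneg_pos mult_nonneg_nonneg mult_pos_pos) auto
    have "Sterm x R w k t n = gfact R w (real k / 2 + real n) * (t ^ n * c / (a n * a (n + k)))"
      unfolding Sterm_def a_def c_def by (rule alg2)
    also have "\<dots> \<le> (c / 2 * a n + 1 / (2 * c) * a (n + k)) * (t ^ n * c / (a n * a (n + k)))"
      using g pos by (rule mult_right_mono)
    also have "\<dots> = (t ^ n * (c * c) / a (n + k) + t ^ n / a n) / 2"
      by (rule alg1[OF apos apos cpos])
    also have "\<dots> = (f n + f (n + k)) / 2"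
      unfolding f_def c2 power_add by (rule alg3)
    finally show ?thesis .
  qed
  have Snn: "0 \<le> Sterm x R w k t n" for n
  proof -
    have "0 \<le> gfact R w (real k / 2 + real n)" by (rule gnn) simp
    moreover have "0 < xfact x n * xfact x (n + k)"
      using apos[of n] apos[of "n+k"] unfolding a_def by (rule mult_pos_pos)
    moreover have "0 \<le> t ^ n * sqrt t ^ k" using t0 by simp
    ultimately show ?thesis unfolding Sterm_def
      by (intro mult_nonneg_nonneg[OF divide_nonneg_pos])
  qed
  have sumshift: "summable (\<lambda>n. f (n + k))" using sumf by (rule summable_ignore_initial_segment)
  have sumsum: "(\<lambda>n. (f n + f (n + k)) / 2) sums ((suminf f + (\<Sum>n. f (n + k))) / 2)"
    by (rule sums_divide, rule sums_add[OF summable_sums[OF sumf] summable_sums[OF sumshift]])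
  have sumg: "summable (\<lambda>n. (f n + f (n + k)) / 2)"
    using sumsum by (rule sums_summable)
  have sumS: "summable (Sterm x R w k t)"
  proof (rule summable_comparison_test'[OF sumg])
    fix n :: nat
    show "norm (Sterm x R w k t n) \<le> (f n + f (n + k)) / 2"
      using Snn[of n] bound[of n] by simp
  qed
  have "(\<Sum>n. Sterm x R w k t n) \<le> (\<Sum>n. (f n + f (n + k)) / 2)"
    by (rule suminf_le[OF bound sumS sumg])
  also have "\<dots> = (suminf f + (\<Sum>n. f (n + k))) / 2"
    using sumsum by (rule sums_unique[symmetric])
  finally have le1: "(\<Sum>n. Sterm x R w k t n) \<le> (suminf f + (\<Sum>n. f (n + k))) / 2" .
  have "0 \<le> sum f {..<k}" by (rule sum_nonneg) (rule fnn)
  then have "(\<Sum>n. f (n + k)) \<le> suminf f"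
    using suminf_split_initial_segment[OF sumf, of k] by linarith
  then have "(suminf f + (\<Sum>n. f (n + k))) / 2 \<le> suminf f" by simp
  with le1 have le: "(\<Sum>n. Sterm x R w k t n) \<le> suminf f" by (rule order_trans)
  have "sum f {0} \<le> suminf f"
    by (rule sum_le_suminf[OF sumf]) (auto intro: fnn)
  moreover have "f 0 = 1" unfolding f_def a_def xfact_def by simp
  ultimately have Npos: "0 < suminf f" by simp
  have "(\<Sum>n. Sterm x R w k t n) / suminf f \<le> 1"
    using le Npos by (simp add: divide_le_eq)
  then show "summable (Sterm x R w k t) \<and> (\<Sum>n. Sterm x R w k t n) / Nfun x t \<le> 1"
    using sumS Nf by simp
qed

end
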